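(* Let $k\ge 2$ and $\ell\ge 2$ be integers, and let $H(x)=B_{k+1}(\ell x+1)-B_{k+1}(x+1)\in\mathbb{Q}[x]$. Then $H(x)$ has at least three distinct complex roots.
   Context: $B_q(x)=\sum_{i=0}^{q}\binom{q}{i}B_i x^{q-i}$ denotes the $q$-th Bernoulli polynomial, where $B_i$ are the Bernoulli numbers with $B_0=1$, $B_1=-1/2$, $B_2=1/6$, $\dots$. For every integer $m\ge 1$ one has $H(m)=(k+1)\sum_{j=m+1}^{\ell m} j^k$. *)

theory Defs
  imports Complex_Main "HOL-Computational_Algebra.Polynomial"
begin

fun bernoulli_num :: "nat \<Rightarrow> rat" where
  "bernoulli_num n =
     (if n = 0 then 1
      else - (\<Sum>i<n. of_nat ((n + 1) choose i) * bernoulli_num i) / of_nat (n + 1))"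

declare bernoulli_num.simps [simp del]

definition bernoulli_poly :: "nat \<Rightarrow> rat poly" where
  "bernoulli_poly q = (\<Sum>i\<le>q. monom (of_nat (q choose i) * bernoulli_num i) (q - i))"

definition H_poly :: "nat \<Rightarrow> nat \<Rightarrow> rat poly" where
  "H_poly k l = pcompose (bernoulli_poly (k + 1)) [:1, of_nat l:]
              - pcompose (bernoulli_poly (k + 1)) [:1, 1:]"

lemma "bernoulli_num 1 = -1/2" "bernoulli_num 2 = 1/6"
  by (simp_all add: bernoulli_num.simps numeral_eq_Suc)

end

theory Submission
  imports Defs "HOL-Computational_Algebra.Fundamental_Theorem_Algebra"
begin


lemma B0: "bernoulli_num 0 = 1" by (simp add: bernoulli_num.simps)
lemma B1: "bernoulli_num 1 = -1/2" by (simp add: bernoulli_num.simps numeral_eq_Suc)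
lemma B2: "bernoulli_num 2 = 1/6" by (simp add: bernoulli_num.simps numeral_eq_Suc)
lemma B3: "bernoulli_num 3 = 0" by (simp add: bernoulli_num.simps numeral_eq_Suc)

lemma pcompose_pow: "pcompose (p ^ e) q = (pcompose p q) ^ e" for p q :: "rat poly"
  by (induct e) (simp_all add: pcompose_mult pcompose_1)

lemma pcompose_monom_lin:
  "coeff (pcompose (monom c e) [:1, a:]) j = c * of_nat (e choose j) * (a::rat) ^ j"
proof -
  have "monom c e = smult c ([:0,1:]^e)" by (simp add: monom_altdef)
  hence "pcompose (monom c e) [:1, a:] = smult c ([:1,a:]^e)"
    by (simp add: pcompose_smult pcompose_pow pcompose_pCons)
  moreover have "degree ([:1,a:]^e) \<le> e"
    using degree_power_le[of "[:1,a:]" e] by (auto intro: order_trans)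
  ultimately show ?thesis
    by (cases "j \<le> e") (auto simp: coeff_linear_poly_power coeff_eq_0)
qed

lemma coeff_H: "coeff (H_poly k l) j =
   (of_nat l ^ j - 1) * (\<Sum>i\<le>k+1. of_nat ((k+1) choose i) * bernoulli_num i * of_nat ((k+1-i) choose j))"
proof -
  have "\<And>a. coeff (pcompose (bernoulli_poly (k+1)) [:1, a:]) j =
     (\<Sum>i\<le>k+1. of_nat ((k+1) choose i) * bernoulli_num i * (of_nat ((k+1-i) choose j) * a ^ j))"
    unfolding bernoulli_poly_def pcompose_sum coeff_sum pcompose_monom_lin
    by (simp only: mult.assoc)
  thus ?thesis unfolding H_poly_def coeff_diff
    by (simp add: sum_subtractf[symmetric] sum_distrib_left algebra_simps del: sum.atMost_Suc)
qed

lemma ch2: "2 * ((m+2) choose 2) = (m+2)*(m+1)"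
  by (simp add: choose_two)
lemma ch3: "6 * ((m+3) choose 3) = (m+3)*(m+2)*(m+1)"
proof (induct m)
  case 0 then show ?case by (simp add: eval_nat_numeral)
next
  case (Suc m)
  have a: "(Suc m + 3) choose 3 = ((m+3) choose 2) + ((m+3) choose 3)"
    by (simp add: eval_nat_numeral)
  have b: "2 * ((m+3) choose 2) = (m+3)*(m+2)" using ch2[of "m+1"] by (simp add: eval_nat_numeral)
  show ?case unfolding a using Suc b by (simp add: algebra_simps)
qed

lemma sum_red:
  assumes "t \<le> n"
  shows "(\<Sum>i\<le>n. f i * of_nat ((n-i) choose (n-t))) = (\<Sum>i\<le>t. f i * (of_nat ((n-i) choose (n-t))::rat))"
proof -
  have "\<forall>i\<in>{..n} - {..t}. f i * (of_nat ((n-i) choose (n-t))::rat) = 0"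
    using assms by (auto simp: binomial_eq_0)
  thus ?thesis by (intro sum.mono_neutral_right) (use assms in auto)
qed

lemma cH:
  fixes m l :: nat
  defines "c \<equiv> \<lambda>t. coeff (H_poly (m+2) l) (m+3-t)"
  shows "c 0 = of_nat l ^ (m+3) - 1"
    and "c 1 = (of_nat l ^ (m+2) - 1) * of_nat (m+3) / 2"
    and "c 2 = (of_nat l ^ (m+1) - 1) * of_nat (m+3) * of_nat (m+2) / 12"
    and "c 3 = 0"
proof -
  have e: "c t = (of_nat l ^ (m+3-t) - 1) * (\<Sum>i\<le>t. of_nat ((m+3) choose i) * bernoulli_num i * of_nat ((m+3-i) choose (m+3-t)))"
    if "t \<le> 3" for t
  proof -
    have "c t = (of_nat l ^ (m+3-t) - 1) * (\<Sum>i\<le>m+3. (of_nat ((m+3) choose i) * bernoulli_num i) * of_nat ((m+3-i) choose (m+3-t)))"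
    proof -
      have k: "m + 2 + 1 = m + 3" by simp
      show ?thesis unfolding c_def coeff_H k by (simp only: mult.assoc)
    qed
    also have "\<dots> = (of_nat l ^ (m+3-t) - 1) * (\<Sum>i\<le>t. (of_nat ((m+3) choose i) * bernoulli_num i) * of_nat ((m+3-i) choose (m+3-t)))"
      using sum_red[of t "m+3"] that by simp
    finally show ?thesis .
  qed
  show "c 0 = of_nat l ^ (m+3) - 1" using e[of 0] by (simp add: B0)
  have s1: "\<And>f::nat\<Rightarrow>rat. (\<Sum>i\<le>1. f i) = f 0 + f 1" by simp
  have s2: "\<And>f::nat\<Rightarrow>rat. (\<Sum>i\<le>2. f i) = f 0 + f 1 + f 2" by (simp add: eval_nat_numeral)
  have s3: "\<And>f::nat\<Rightarrow>rat. (\<Sum>i\<le>3. f i) = f 0 + f 1 + f 2 + f 3" by (simp add: eval_nat_numeral)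
  have b1: "(m+3) choose (m+2) = m+3" "(m+2) choose (m+2) = 1"
    by (subst binomial_symmetric; simp)+
  have b2: "(m+3) choose (m+1) = (m+3) choose 2" "(m+2) choose (m+1) = m+2" "(m+1) choose (m+1) = 1"
    by (subst binomial_symmetric; simp)+
  have b3: "(m+3) choose m = (m+3) choose 3" "(m+2) choose m = (m+2) choose 2" "(m+1) choose m = m+1"
    "m choose m = 1"
    by (subst binomial_symmetric; simp)+
  have r2: "rat_of_nat ((m+2) choose 2) = of_nat (m+2) * of_nat (m+1) / 2"
    using arg_cong[OF ch2[of m], of rat_of_nat] by (simp add: algebra_simps)
  have r2': "rat_of_nat ((m+3) choose 2) = of_nat (m+3) * of_nat (m+2) / 2"
    using arg_cong[OF ch2[of "m+1"], of rat_of_nat] by (simp add: algebra_simps eval_nat_numeral)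
  have r3: "rat_of_nat ((m+3) choose 3) = of_nat (m+3) * of_nat (m+2) * of_nat (m+1) / 6"
    using arg_cong[OF ch3[of m], of rat_of_nat] by (simp add: algebra_simps)
  have idx: "m+3-1 = m+2" "m+3-0 = m+3" "m+3-2 = m+1" "m+3-3 = m" by simp_all
  show "c 1 = (of_nat l ^ (m+2) - 1) * of_nat (m+3) / 2" using e[of 1, unfolded s1 idx B0 B1 b1 idx]
    by (simp add: field_simps)
  show "c 2 = (of_nat l ^ (m+1) - 1) * of_nat (m+3) * of_nat (m+2) / 12" using e[of 2, unfolded s2 idx B0 B1 B2 b1 idx b2 r2']
    by (simp add: field_simps)
  show "c 3 = 0" using e[of 3, unfolded s3 idx B0 B1 B2 B3 b3 r2 r2' r3]
    by (simp add: field_simps)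
qed



lemma c0: "(l::int) \<ge> 2 \<Longrightarrow> 4*2*(l-1)*(l^2*l-1) \<noteq> 3*3*(l*l-1)^2"
proof -
  assume l: "l \<ge> 2"
  have "3*3*(l*l-1)^2 - 4*2*(l-1)*(l^2*l-1) = (l-1)^2 * (l^2+10*l+1)" by algebra
  moreover have "(l-1)^2 * (l^2+10*l+1) > 0" using l by (intro mult_pos_pos) auto
  ultimately show ?thesis by linarith
qed
lemma c1: "(l::int) \<ge> 2 \<Longrightarrow> u \<ge> 1 \<Longrightarrow> 4*3*(u-1)*(l^2*u-1) \<noteq> 3*4*(l*u-1)^2"
proof -
  assume l: "l \<ge> 2" and u: "u \<ge> 1"
  have "3*4*(l*u-1)^2 - 4*3*(u-1)*(l^2*u-1) = 12*u*(l-1)^2" by algebra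
  moreover have "12*u*(l-1)^2 > 0" using l u by (intro mult_pos_pos) auto
  ultimately show ?thesis by linarith
qed
lemma c2: "(l::int) \<ge> 2 \<Longrightarrow> u = l^3 \<Longrightarrow> 4*4*(u-1)*(l^2*u-1) \<noteq> 3*5*(l*u-1)^2"
proof -
  assume l: "l \<ge> 2" and u: "u = l^3"
  define X where "X = l^2*u - 16*l^2 - 16 + 30*l"
  have i1: "4*4*(u-1)*(l^2*u-1) - 3*5*(l*u-1)^2 = u * X + 1" unfolding X_def by algebra
  have i2: "X = 4*l*(l-2)^2 + 14*l - 16 + l^2*(u - 4*l)"
    unfolding X_def by algebra
  have "u - 4*l \<ge> 0" proof -
    have "l*l \<ge> 2*2" using l by (intro mult_mono) auto
    hence "l*(l*l) \<ge> l*4" using l by (intro mult_left_mono) auto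
    thus ?thesis unfolding u by (simp add: power3_eq_cube)
  qed
  hence a: "l^2*(u - 4*l) \<ge> 0" by simp
  have b: "4*l*(l-2)^2 \<ge> 0" using l by simp
  have "X > 0" using i2 a b l by linarith
  moreover have "u > 0" using l u by simp
  ultimately have "u * X > 0" by simp
  thus ?thesis using i1 by linarith
qed
lemma c3: "(l::int) \<ge> 2 \<Longrightarrow> u \<ge> 16 \<Longrightarrow> j \<ge> 2 \<Longrightarrow> 4*(j+3)*(u-1)*(l^2*u-1) \<noteq> 3*(j+4)*(l*u-1)^2"
proof -
  assume l: "l \<ge> 2" and u: "u \<ge> 16" and j: "j \<ge> 2"
  define X where "X = j*l^2*u - 4*(j+3)*(l^2+1) + 6*(j+4)*l"
  have i1: "4*(j+3)*(u-1)*(l^2*u-1) - 3*(j+4)*(l*u-1)^2 = u * X + j" unfolding X_def by algebra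
  have x: "X = (j*l^2)*u - 4*(j*l^2) - 12*l^2 - 4*j - 12 + 6*(j*l) + 24*l" unfolding X_def by algebra
  have a: "(j*l^2)*u \<ge> (j*l^2)*16" using u j by (intro mult_left_mono) auto
  have b: "j*l^2 \<ge> 2*l^2" using j by (intro mult_right_mono) auto
  have c: "j*l \<ge> j*2" using l j by (intro mult_left_mono) auto
  have "l^2 \<ge> 0" by simp
  hence "X > 0" using x a b c j l by linarith
  moreover have "u > 0" using u by simp
  ultimately have "u * X > 0" by simp
  thus ?thesis using i1 j by linarith
qed

lemma arith:
  fixes l m :: nat
  assumes "l \<ge> 2"
  shows "4*(int m+2)*(int l^(m+3)-1)*(int l^(m+1)-1) \<noteq> 3*(int m+3)*(int l^(m+2)-1)^2"
proof -
  define L where "L = int l"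
  define u where "u = L^(m+1)"
  have L: "L \<ge> 2" using assms unfolding L_def by simp
  have p3: "L^(m+3) = L^2*u" and p2: "L^(m+2) = L*u" unfolding u_def by (simp_all add: power_add[symmetric] eval_nat_numeral)
  have "4*(int m+2)*(u-1)*(L^2*u-1) \<noteq> 3*(int m+3)*(L*u-1)^2"
  proof (cases "m \<le> 2")
    case True
    then consider "m = 0" | "m = 1" | "m = 2" by linarith
    then show ?thesis
    proof cases
      case 1 then show ?thesis using c0[OF L] unfolding u_def by (simp add: algebra_simps power2_eq_square)
    next
      case 2
      have "u \<ge> 1" unfolding u_def using L by (intro one_le_power) simp
      then have "4*3*(u-1)*(L^2*u-1) \<noteq> 3*4*(L*u-1)^2" by (rule c1[OF L])
      then show ?thesis using 2 by simp
    next
      case 3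
      have "u = L^3" unfolding u_def 3 by simp
      then have "4*4*(u-1)*(L^2*u-1) \<noteq> 3*5*(L*u-1)^2" by (rule c2[OF L])
      then show ?thesis using 3 by simp
    qed
  next
    case False
    have "u \<ge> 2^(m+1)" unfolding u_def using L by (intro power_mono) auto
    moreover have "(2::int)^(m+1) \<ge> 2^4" using False by (intro power_increasing) auto
    ultimately have u16: "u \<ge> 16" by simp
    have j: "int m - 1 \<ge> 2" using False by simp
    have "4*((int m - 1)+3)*(u-1)*(L^2*u-1) \<noteq> 3*((int m - 1)+4)*(L*u-1)^2" by (rule c3[OF L u16 j])
    moreover have "(int m - 1)+3 = int m + 2" "(int m - 1)+4 = int m + 3" by simp_all
    ultimately show ?thesis by simp
  qed
  thus ?thesis unfolding L_def[symmetric] p3 p2 u_def[symmetric] by (simp add: mult_ac)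
qed


lemma coeff_H_high: "j > k+1 \<Longrightarrow> coeff (H_poly k l) j = 0"
  unfolding coeff_H by (auto intro!: sum.neutral simp: binomial_eq_0)

lemma coeffQ:
  fixes c r :: complex
  assumes "i \<le> b"
  shows "coeff (smult c (monom 1 a * [:-r,1:]^b)) (a + i) = c * of_nat (b choose i) * (-r)^(b-i)"
  using assms by (simp add: coeff_monom_mult coeff_linear_poly_power)

lemma coeffQ0:
  fixes c :: complex
  assumes "j < a"
  shows "coeff (smult c (monom 1 a * q)) j = 0"
  using assms by (simp add: coeff_monom_mult)

theorem mainTheorem2:
  fixes k l :: nat
  assumes "k \<ge> 2" and "l \<ge> 2"
  shows "card {z :: complex. poly (map_poly of_rat (H_poly k l)) z = 0} \<ge> 3"
proof (rule ccontr)
  assume ncard: "\<not> card {z :: complex. poly (map_poly of_rat (H_poly k l)) z = 0} \<ge> 3"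
  obtain m where km: "k = m + 2" using assms(1) by (metis add.commute le_iff_add)
  define P :: "complex poly" where "P = map_poly of_rat (H_poly k l)"
  define S where "S = {z. poly P z = 0}"
  have cP: "coeff P j = of_rat (coeff (H_poly k l) j)" for j
    unfolding P_def by (simp add: coeff_map_poly)
  have c0: "coeff (H_poly k l) (m+3) = of_nat l ^ (m+3) - 1"
    using cH(1)[of m l] km by simp
  have c1: "coeff (H_poly k l) (m+2) = (of_nat l ^ (m+2) - 1) * of_nat (m+3) / 2"
    using cH(2)[of m l] km by simp
  have c2: "coeff (H_poly k l) (m+1) = (of_nat l ^ (m+1) - 1) * of_nat (m+3) * of_nat (m+2) / 12"
    using cH(3)[of m l] km by (simp add: numeral_2_eq_2)
  have c3: "coeff (H_poly k l) m = 0"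
    using cH(4)[of m l] km by simp
  have lp: "(of_nat l::rat) ^ j > 1" if "j > 0" for j
    using assms(2) that by (simp add: one_less_power)
  have c0nz: "coeff (H_poly k l) (m+3) \<noteq> 0" using c0 lp[of "m+3"] by simp
  have "(of_nat l ^ (m+2) - 1::rat) \<noteq> 0" using lp[of "m+2"] by simp
  hence c1nz: "coeff (H_poly k l) (m+2) \<noteq> 0" unfolding c1 by (simp del: of_nat_add)
  have "(of_nat l ^ (m+1) - 1::rat) \<noteq> 0" using lp[of "m+1"] by simp
  hence c2nz: "coeff (H_poly k l) (m+1) \<noteq> 0" unfolding c2 by (simp del: of_nat_add)
  have degP: "degree P = m+3"
  proof (rule antisym)
    show "degree P \<le> m+3"
      by (rule degree_le) (auto simp: cP coeff_H_high km)
    show "m+3 \<le> degree P" by (rule le_degree) (simp add: cP c0nz)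
  qed
  have Pnz: "P \<noteq> 0" using degP by auto
  have lcP: "lead_coeff P = of_rat (coeff (H_poly k l) (m+3))" using degP cP by simp
  have finS: "finite S" unfolding S_def using Pnz by (rule poly_roots_finite)
  have "poly P 0 = 0" unfolding poly_0_coeff_0 cP coeff_H by simp
  hence S0: "0 \<in> S" unfolding S_def by simp
  have cardS: "card S \<le> 2" using ncard unfolding S_def P_def by simp
  obtain r where r: "S \<subseteq> {0, r}" "r \<noteq> 0"
  proof (cases "S \<subseteq> {0}")
    case True then show ?thesis using that[of 1] by auto
  next
    case False
    then obtain r where rS: "r \<in> S" "r \<noteq> 0" by auto
    have sub: "{0, r} \<subseteq> S" using rS S0 by auto
    have "card {0, r} = 2" using rS by simp
    hence "{0, r} = S" using card_subset_eq[OF finS sub] cardS card_mono[OF finS sub] by simp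
    thus ?thesis using that[of r] rS by auto
  qed
  define a where "a = order 0 P"
  define b where "b = order r P"
  define c where "c = lead_coeff P"
  have "P = smult c (\<Prod>z\<in>S. [:-z, 1:] ^ order z P)"
    unfolding c_def S_def by (rule complex_poly_decompose[symmetric])
  also have "(\<Prod>z\<in>S. [:-z, 1:] ^ order z P) = (\<Prod>z\<in>{0,r}. [:-z, 1:] ^ order z P)"
  proof (rule prod.mono_neutral_left)
    show "\<forall>z\<in>{0, r} - S. [:-z, 1:] ^ order z P = 1"
      using Pnz by (auto simp: S_def order_root)
  qed (use r in auto)
  also have "\<dots> = monom 1 a * [:-r,1:]^b"
    using r(2) by (simp add: a_def b_def monom_altdef)
  finally have Pf: "P = smult c (monom 1 a * [:-r,1:]^b)" .
  have cnz: "c \<noteq> 0" unfolding c_def using Pnz by simp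
  have "degree P = a + b"
    unfolding Pf using cnz by (simp add: degree_mult_eq degree_monom_eq degree_linear_power)
  hence ab: "a + b = m + 3" using degP by simp
  have b1: "b \<ge> 1"
  proof (rule ccontr)
    assume "\<not> b \<ge> 1"
    hence "m + 2 < a" using ab by simp
    hence "coeff P (m+2) = 0" unfolding Pf by (rule coeffQ0)
    thus False using c1nz cP[of "m+2"] by simp
  qed
  have e1: "coeff P (m+2) = c * of_nat b * (-r)"
  proof -
    have "m + 2 = a + (b - 1)" using ab b1 by simp
    hence "coeff P (m+2) = c * of_nat (b choose (b-1)) * (-r)^(b-(b-1))"
      unfolding Pf using coeffQ[of "b-1" b c a r] by simp
    moreover have "b choose (b-1) = b" using b1 by (subst binomial_symmetric) auto
    moreover have "b - (b-1) = 1" using b1 by simp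
    ultimately show ?thesis by simp
  qed
  have b2: "b \<ge> 2"
  proof (rule ccontr)
    assume "\<not> b \<ge> 2"
    hence "m + 1 < a" using ab by simp
    hence "coeff P (m+1) = 0" unfolding Pf by (rule coeffQ0)
    thus False using c2nz cP[of "m+1"] by simp
  qed
  have e2: "coeff P (m+1) = c * of_nat (b choose 2) * r^2"
  proof -
    have "m + 1 = a + (b - 2)" using ab b2 by simp
    hence "coeff P (m+1) = c * of_nat (b choose (b-2)) * (-r)^(b-(b-2))"
      unfolding Pf using coeffQ[of "b-2" b c a r] by simp
    moreover have "b choose (b-2) = b choose 2" using b2 by (subst binomial_symmetric) auto
    moreover have "b - (b-2) = 2" using b2 by simp
    ultimately show ?thesis by simp
  qed
  have rnz: "r \<noteq> 0" using r by simp
  have b3: "b = 2"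
  proof (rule ccontr)
    assume "b \<noteq> 2"
    hence bb: "b \<ge> 3" using b2 by simp
    have "m = a + (b - 3)" using ab bb by simp
    hence "coeff P m = c * of_nat (b choose (b-3)) * (-r)^(b-(b-3))"
      unfolding Pf using coeffQ[of "b-3" b c a r] by simp
    also have "b choose (b-3) = b choose 3" using bb by (subst binomial_symmetric) auto
    also have "b - (b - 3) = 3" using bb by simp
    finally have "coeff P m = c * of_nat (b choose 3) * (-r)^3" .
    moreover have "b choose 3 \<noteq> 0" using bb by simp
    ultimately have "coeff P m \<noteq> 0" using cnz rnz by simp
    thus False using c3 cP[of m] by simp
  qed
  have "(coeff P (m+2))^2 = 4 * c * coeff P (m+1)"
    unfolding e1 e2 b3 by (simp add: power2_eq_square)
  hence "of_rat ((coeff (H_poly k l) (m+2))^2) = (of_rat (4 * coeff (H_poly k l) (m+3) * coeff (H_poly k l) (m+1)) :: complex)"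
    unfolding c_def lcP cP by (simp add: of_rat_mult of_rat_power degP)
  hence eq: "(coeff (H_poly k l) (m+2))^2 = 4 * coeff (H_poly k l) (m+3) * coeff (H_poly k l) (m+1)"
    by (simp only: of_rat_eq_iff)
  define L where "L = (of_nat l :: rat)"
  have "((L ^ (m+2) - 1) * of_nat (m+3) / 2)^2 = 4 * (L ^ (m+3) - 1) * ((L ^ (m+1) - 1) * of_nat (m+3) * of_nat (m+2) / 12)"
    using eq unfolding c0 c1 c2 L_def .
  hence "of_nat (m+3) * (3*(of_nat m+3)*(L^(m+2)-1)^2) = of_nat (m+3) * (4*(of_nat m+2)*(L^(m+3)-1)*(L^(m+1)-1))"
    by (simp add: field_simps power2_eq_square)
  hence "3*(of_nat m+3)*(L^(m+2)-1)^2 = 4*(of_nat m+2)*(L^(m+3)-1)*(L^(m+1)-1)"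
    by simp
  hence "(of_int (3*(int m+3)*(int l^(m+2)-1)^2) :: rat) = of_int (4*(int m+2)*(int l^(m+3)-1)*(int l^(m+1)-1))"
    unfolding L_def by simp
  hence "3*(int m+3)*(int l^(m+2)-1)^2 = 4*(int m+2)*(int l^(m+3)-1)*(int l^(m+1)-1)"
    by (simp only: of_int_eq_iff)
  thus False using arith[OF assms(2), of m] by simp
qed

end
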